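(* In the periodic lock scheduling problem, there exists a schedule $\sigma$ such that $C_{\mathrm{avg},\sigma}$ is well-defined (the limit exists) and finite.
   Context: Periodic lock scheduling problem. Time is discrete, periods $t=1,2,\dots$. There are $k$ vessel streams; stream $i$ has a direction $\delta_i\in\{D,U\}$, an integer periodicity $\lambda_i\ge1$ and an integer offset $1\le\mu_i\le\lambda_i$; $a_i(t)=1$ if $t\equiv\mu_i\pmod{\lambda_i}$ and $0$ otherwise, $a_\delta(t)=\sum_{i:\delta_i=\delta}a_i(t)$. A schedule is a sequence $\sigma=(\sigma(t))_{t\ge1}$ with $\sigma(t)\in\{D,U,W\}$ ($D$: process downstream waiting vessels and switch alignment to upstream; $U$ symmetrically; $W$: wait); it is feasible if the non-$W$ actions alternate between $D$ and $U$. Queue lengths: $n_D(0)=n_U(0)=0$ and for $t\ge1$, $n_\delta(t)=0$ if $\sigma(t)=\delta$ and $n_\delta(t)=n_\delta(t-1)+a_\delta(t)$ otherwise. $C_\sigma(t)=n_D(t)+n_U(t)$ and $C_{\mathrm{avg},\sigma}=\lim_{T\to\infty}\frac1T\sum_{t=1}^TC_\sigma(t)$. *)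

theory Defs
  imports "HOL-Analysis.Analysis"
begin

datatype direction = Dn | Up
datatype action = ActD | ActU | ActW

definition act_of :: "direction \<Rightarrow> action" where
  "act_of d = (case d of Dn \<Rightarrow> ActD | Up \<Rightarrow> ActU)"

text \<open>Streams are indexed by i < k; stream i has direction dir i,
 periodicity lam i \<ge> 1, offset 1 \<le> mu i \<le> lam i.\<close>
definition valid_instance :: "nat \<Rightarrow> (nat \<Rightarrow> direction) \<Rightarrow> (nat \<Rightarrow> nat) \<Rightarrow> (nat \<Rightarrow> nat) \<Rightarrow> bool" where
  "valid_instance k dir lam mu \<longleftrightarrow> (\<forall>i<k. 1 \<le> lam i \<and> 1 \<le> mu i \<and> mu i \<le> lam i)"

definition arrival :: "(nat \<Rightarrow> nat) \<Rightarrow> (nat \<Rightarrow> nat) \<Rightarrow> nat \<Rightarrow> nat \<Rightarrow> nat" where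
  "arrival lam mu i t = (if t mod lam i = mu i mod lam i then 1 else 0)"

definition arrivals :: "nat \<Rightarrow> (nat \<Rightarrow> direction) \<Rightarrow> (nat \<Rightarrow> nat) \<Rightarrow> (nat \<Rightarrow> nat) \<Rightarrow> direction \<Rightarrow> nat \<Rightarrow> nat" where
  "arrivals k dir lam mu d t = (\<Sum>i\<in>{i. i < k \<and> dir i = d}. arrival lam mu i t)"

text \<open>A schedule is a function from periods t = 1,2,... to actions (value at 0 irrelevant).\<close>
definition feasible :: "(nat \<Rightarrow> action) \<Rightarrow> bool" where
  "feasible \<sigma> \<longleftrightarrow> (\<forall>s t. 1 \<le> s \<and> s < t \<and> \<sigma> s \<noteq> ActW \<and> \<sigma> t \<noteq> ActW
       \<and> (\<forall>r. s < r \<and> r < t \<longrightarrow> \<sigma> r = ActW) \<longrightarrow> \<sigma> s \<noteq> \<sigma> t)"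

fun queue :: "nat \<Rightarrow> (nat \<Rightarrow> direction) \<Rightarrow> (nat \<Rightarrow> nat) \<Rightarrow> (nat \<Rightarrow> nat) \<Rightarrow> (nat \<Rightarrow> action) \<Rightarrow> direction \<Rightarrow> nat \<Rightarrow> nat" where
  "queue k dir lam mu \<sigma> d 0 = 0"
| "queue k dir lam mu \<sigma> d (Suc t) =
     (if \<sigma> (Suc t) = act_of d then 0
      else queue k dir lam mu \<sigma> d t + arrivals k dir lam mu d (Suc t))"

definition cost :: "nat \<Rightarrow> (nat \<Rightarrow> direction) \<Rightarrow> (nat \<Rightarrow> nat) \<Rightarrow> (nat \<Rightarrow> nat) \<Rightarrow> (nat \<Rightarrow> action) \<Rightarrow> nat \<Rightarrow> nat" where
  "cost k dir lam mu \<sigma> t = queue k dir lam mu \<sigma> Dn t + queue k dir lam mu \<sigma> Up t"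

definition avg_cost_seq :: "nat \<Rightarrow> (nat \<Rightarrow> direction) \<Rightarrow> (nat \<Rightarrow> nat) \<Rightarrow> (nat \<Rightarrow> nat) \<Rightarrow> (nat \<Rightarrow> action) \<Rightarrow> nat \<Rightarrow> real" where
  "avg_cost_seq k dir lam mu \<sigma> T = (\<Sum>t=1..T. real (cost k dir lam mu \<sigma> t)) / real T"

end

theory Submission
  imports Defs
begin

lemma cesaro_periodic:
  fixes f :: "nat \<Rightarrow> real"
  assumes p: "p > 0" and per: "\<And>t. f (t + p) = f t"
  shows "(\<lambda>T. (\<Sum>t=1..T. f t) / real T) \<longlonglongrightarrow> (\<Sum>t=1..p. f t) / real p"
proof -
  define S where "S T = (\<Sum>t=1..T. f t)" for T
  define A where "A = S p"
  have SP: "S (T + p) = S T + A" for T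
  proof (induction T)
    case 0 then show ?case by (simp add: S_def A_def)
  next
    case (Suc T)
    have "S (Suc T + p) = S (T + p) + f (Suc T + p)" by (simp add: S_def)
    also have "f (Suc T + p) = f (Suc T)" by (rule per)
    finally show ?case using Suc by (simp add: S_def)
  qed
  define h where "h T = S T - real T * A / real p" for T
  have hP: "h (T + p) = h T" for T
    using p by (simp add: h_def SP field_simps)
  have hq: "h (T + q * p) = h T" for T q
  proof (induction q)
    case (Suc q)
    have "h (T + Suc q * p) = h ((T + q * p) + p)" by (simp add: algebra_simps)
    then show ?case using Suc hP by simp
  qed simp
  have hmod: "h T = h (T mod p)" for T
    using hq[of "T mod p" "T div p"] by simp
  define M where "M = (\<Sum>t<p. \<bar>h t\<bar>)"
  have hb: "\<bar>h T\<bar> \<le> M" for T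
  proof -
    have "\<bar>h (T mod p)\<bar> \<le> M" unfolding M_def
      by (rule member_le_sum) (use p in auto)
    then show ?thesis using hmod by simp
  qed
  have z: "(\<lambda>T. h T / real T) \<longlonglongrightarrow> 0"
  proof (rule Lim_null_comparison)
    show "\<forall>\<^sub>F T in sequentially. norm (h T / real T) \<le> M / real T"
      using hb by (auto intro!: eventuallyI divide_right_mono simp: abs_divide)
    show "(\<lambda>T. M / real T) \<longlonglongrightarrow> 0" by (rule lim_const_over_n)
  qed
  have "(\<lambda>T. A / real p + h T / real T) \<longlonglongrightarrow> A / real p + 0"
    by (intro tendsto_add z tendsto_const)
  moreover have "\<forall>\<^sub>F T in sequentially. A / real p + h T / real T = S T / real T"
    using eventually_gt_at_top[of 0]
    by eventually_elim (use p in \<open>simp add: h_def field_simps\<close>)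
  ultimately have "(\<lambda>T. S T / real T) \<longlonglongrightarrow> A / real p"
    using Lim_transform_eventually by fastforce
  then show ?thesis by (simp add: S_def A_def)
qed


definition alt :: "nat \<Rightarrow> action" where
  "alt t = (if odd t then ActD else ActU)"

lemma queue_alt:
  "queue k dir lam mu alt Dn t = (if t = 0 \<or> odd t then 0 else arrivals k dir lam mu Dn t)
   \<and> queue k dir lam mu alt Up t = (if even t then 0 else arrivals k dir lam mu Up t)"
  by (induction t) (auto simp: alt_def act_of_def)

lemma feasible_alt: "feasible alt"
  unfolding feasible_def
proof (intro allI impI)
  fix s t assume H: "1 \<le> s \<and> s < t \<and> alt s \<noteq> ActW \<and> alt t \<noteq> ActW
       \<and> (\<forall>r. s < r \<and> r < t \<longrightarrow> alt r = ActW)"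
  have "t = Suc s"
  proof (rule ccontr)
    assume "t \<noteq> Suc s"
    then have "s < Suc s \<and> Suc s < t" using H by auto
    then have "alt (Suc s) = ActW" using H by blast
    then show False by (simp add: alt_def split: if_splits)
  qed
  then show "alt s \<noteq> alt t" by (simp add: alt_def)
qed

theorem lemma4:
  fixes k :: nat and dir :: "nat \<Rightarrow> direction" and lam mu :: "nat \<Rightarrow> nat"
  assumes "valid_instance k dir lam mu"
  shows "\<exists>\<sigma> L. feasible \<sigma> \<and> (avg_cost_seq k dir lam mu \<sigma> \<longlonglongrightarrow> L)"
proof -
  define p where "p = 2 * (\<Prod>i<k. lam i)"
  have lpos: "\<And>i. i < k \<Longrightarrow> lam i > 0" using assms by (auto simp: valid_instance_def)
  have p: "p > 0" unfolding p_def using lpos by (simp add: prod_pos)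
  have dv: "lam i dvd p" if "i < k" for i
    unfolding p_def using that by (intro dvd_mult dvd_prodI) auto
  have arrP: "arrivals k dir lam mu d (t + p) = arrivals k dir lam mu d t" for d t
    unfolding arrivals_def
  proof (rule sum.cong)
    fix i assume "i \<in> {i. i < k \<and> dir i = d}"
    then have "lam i dvd p" using dv by auto
    then have "(t + p) mod lam i = t mod lam i" by (auto elim!: dvdE simp: mod_add_right_eq[symmetric])
    then show "arrival lam mu i (t + p) = arrival lam mu i t" by (simp add: arrival_def)
  qed simp
  define f where "f t = real (if odd t then arrivals k dir lam mu Up t else arrivals k dir lam mu Dn t)" for t
  have ev: "even p" unfolding p_def by simp
  have fP: "f (t + p) = f t" for t
    using ev by (simp add: f_def arrP)
  have cf: "t \<ge> 1 \<Longrightarrow> real (cost k dir lam mu alt t) = f t" for t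
    by (simp add: cost_def queue_alt f_def)
  have eq: "avg_cost_seq k dir lam mu alt = (\<lambda>T. (\<Sum>t=1..T. f t) / real T)"
    by (rule ext) (simp add: avg_cost_seq_def cf)
  show ?thesis
    using feasible_alt cesaro_periodic[of p f, OF p fP] eq by metis
qed

end
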